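(* Let $f:X\to X$, $X=[c_0,c_N]$, satisfy properties P1–P6 (with slope $\lambda\in(0,1)$), let $\{\xi_r\}_{r\in\mathbb{N}}$ be a well-cutting orbit of $f$, and define $\phi:[c_0,c_N]\to\mathbb{R}$ by $\phi(x)=x+\sum_{n\in\mathcal{N}(x)}\lambda^n$, where $\mathcal{N}(x):=\{n\geqslant1:\xi_n<x\}$. Then $\phi$ is strictly increasing, left-continuous on $[c_0,c_N]$, continuous on $[c_0,c_N]\setminus\{\xi_r\}_{r\geqslant1}$, and $\lim_{x\searrow\xi_r}\phi(x)=\phi(\xi_r)+\lambda^r$ for all $r\geqslant 1$. Moreover, \[ \phi([c_0,c_N])=[\phi(c_0),\phi(c_N)]\setminus\bigcup_{r=1}^\infty G_r,\qquad G_r:=(\phi(\xi_r),\phi(\xi_r)+\lambda^r]\ (r\geqslant 1), \] and $\overline{G_r}\cap\overline{G_l}=\emptyset$ for all $r\neq l$.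
   Context: Setting: $N\geqslant 2$, $c_0<c_1<\dots<c_N$, $X=[c_0,c_N]$, $X_1=[c_0,c_1)$, $X_i=(c_{i-1},c_i)$ for $1<i<N$, $X_N=(c_{N-1},c_N]$; $\Delta:=\{c_1,\dots,c_{N-1}\}$; $f_i$ is the continuous extension of $f|_{X_i}$ to $\overline{X_i}$; $\widetilde X:=\bigcap_{n\geqslant0}f^{-n}(X\setminus\Delta)$. Atoms: $F_i(A):=\overline{f(A\cap X_i)}$, $A_{i_1\dots i_n}:=F_{i_n}\circ\dots\circ F_{i_1}(X)$ is an atom of generation $n$ if non-empty, $\mathcal{A}_n$ their set, $\mathcal{A}_n(x):=\{A\in\mathcal{A}_n:\exists t\in\mathbb{N},f^{t+n}(x)\in A\}$; attractor $\Lambda:=\bigcap_{n\geqslant1}\bigcup_{A\in\mathcal{A}_n}A$. $\Delta_{lr}(x)$ is the set of $c_i\in\Delta$ such that for every $n\geqslant1$ there is $A\in\mathcal{A}_n(x)$ with $c_i\in A$, $f^{t+n}(x)\in A\cap X_i$ and $f^{t'+n}(x)\in A\cap X_{i+1}$ for some $t,t'\in\mathbb{N}$. P1: $f$ is discontinuous at every point of $\Delta$, and $f|_{X_i}$ is affine with slope $\lambda\in(0,1)$ for every $i$. P2 (separation): each $f_i$ injective and $f_i(\overline{X_i})\cap f_j(\overline{X_j})=\emptyset$ for $i\neq j$. P3: $\Lambda$ is a Cantor set. P4: $\bigcup_{i=1}^{N-1}\{f_i(c_i),f_{i+1}(c_i)\}\subset\widetilde X$. P5: for some $i$, $\{f^n(f_i(c_i))\}_n$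 or $\{f^n(f_{i+1}(c_i))\}_n$ is dense in $\Lambda$. P6: $c_i\in\Delta_{lr}(x)$ for all $x\in\widetilde X$ and all $i\in\{1,\dots,N-1\}$. A well-cutting orbit of $f$ is an orbit $\{\xi_r\}_{r\in\mathbb{N}}$, $\xi_r=f^r(\xi_0)$, with $\xi_0\in\Lambda\cap\widetilde X$, containing no point of: (1) the boundary points of the gaps of the Cantor set $\Lambda$; (2) the forward orbits of $c_0$ and $c_N$; (3) the forward orbits of $f_i(c_i)$ and $f_{i+1}(c_i)$ for $i\in\{1,\dots,N-1\}$. *)

theory Defs
  imports "HOL-Analysis.Analysis"
begin

text \<open>Partition points are c 0 < c 1 < ... < c N; all notions are parametrised by N and c.\<close>

definition XX :: "(nat \<Rightarrow> real) \<Rightarrow> nat \<Rightarrow> real set" where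
  "XX c N = {c 0 .. c N}"

definition Xi :: "nat \<Rightarrow> (nat \<Rightarrow> real) \<Rightarrow> nat \<Rightarrow> real set" where
  "Xi N c i = (if i = 1 then {c 0 ..< c 1}
               else if i = N then {c (N - 1) <.. c N}
               else {c (i - 1) <..< c i})"

definition Delta :: "nat \<Rightarrow> (nat \<Rightarrow> real) \<Rightarrow> real set" where
  "Delta N c = c ` {1 .. N - 1}"

text \<open>f_i: the continuous extension of f restricted to X_i to the closure of X_i.\<close>
definition fext :: "nat \<Rightarrow> (nat \<Rightarrow> real) \<Rightarrow> (real \<Rightarrow> real) \<Rightarrow> nat \<Rightarrow> real \<Rightarrow> real" where
  "fext N c f i x = (if x \<in> Xi N c i then f x else Lim (at x within Xi N c i) f)"

definition Xtilde :: "nat \<Rightarrow> (nat \<Rightarrow> real) \<Rightarrow> (real \<Rightarrow> real) \<Rightarrow> real set" where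
  "Xtilde N c f = {x \<in> XX c N. \<forall>n. (f ^^ n) x \<in> XX c N - Delta N c}"

definition FF :: "nat \<Rightarrow> (nat \<Rightarrow> real) \<Rightarrow> (real \<Rightarrow> real) \<Rightarrow> nat \<Rightarrow> real set \<Rightarrow> real set" where
  "FF N c f i A = closure (f ` (A \<inter> Xi N c i))"

text \<open>Atom A_{i1...in} = F_in o ... o F_i1 (X).\<close>
definition atom :: "nat \<Rightarrow> (nat \<Rightarrow> real) \<Rightarrow> (real \<Rightarrow> real) \<Rightarrow> nat list \<Rightarrow> real set" where
  "atom N c f is = fold (\<lambda>i A. FF N c f i A) is (XX c N)"

definition atoms :: "nat \<Rightarrow> (nat \<Rightarrow> real) \<Rightarrow> (real \<Rightarrow> real) \<Rightarrow> nat \<Rightarrow> real set set" where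
  "atoms N c f n = {A. \<exists>is. length is = n \<and> set is \<subseteq> {1..N} \<and> A = atom N c f is \<and> A \<noteq> {}}"

definition atoms_of :: "nat \<Rightarrow> (nat \<Rightarrow> real) \<Rightarrow> (real \<Rightarrow> real) \<Rightarrow> nat \<Rightarrow> real \<Rightarrow> real set set" where
  "atoms_of N c f n x = {A \<in> atoms N c f n. \<exists>t. (f ^^ (t + n)) x \<in> A}"

definition attractor :: "nat \<Rightarrow> (nat \<Rightarrow> real) \<Rightarrow> (real \<Rightarrow> real) \<Rightarrow> real set" where
  "attractor N c f = (\<Inter>n\<in>{1..}. \<Union>(atoms N c f n))"

definition Delta_lr :: "nat \<Rightarrow> (nat \<Rightarrow> real) \<Rightarrow> (real \<Rightarrow> real) \<Rightarrow> real \<Rightarrow> real set" where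
  "Delta_lr N c f x = {c i | i. i \<in> {1 .. N - 1} \<and>
     (\<forall>n\<ge>1. \<exists>A \<in> atoms_of N c f n x. c i \<in> A
        \<and> (\<exists>t. (f ^^ (t + n)) x \<in> A \<inter> Xi N c i)
        \<and> (\<exists>t'. (f ^^ (t' + n)) x \<in> A \<inter> Xi N c (i + 1)))}"

definition cantor_set :: "real set \<Rightarrow> bool" where
  "cantor_set S \<longleftrightarrow> S \<noteq> {} \<and> compact S \<and> (\<forall>x\<in>S. x islimpt S)
     \<and> (\<forall>x\<in>S. connected_component_set S x = {x})"

definition P1 :: "nat \<Rightarrow> (nat \<Rightarrow> real) \<Rightarrow> (real \<Rightarrow> real) \<Rightarrow> real \<Rightarrow> bool" where
  "P1 N c f lam \<longleftrightarrow> 0 < lam \<and> lam < 1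
     \<and> (\<forall>x\<in>Delta N c. \<not> continuous (at x within XX c N) f)
     \<and> (\<forall>i\<in>{1..N}. \<exists>b. \<forall>x\<in>Xi N c i. f x = lam * x + b)"

definition P2 :: "nat \<Rightarrow> (nat \<Rightarrow> real) \<Rightarrow> (real \<Rightarrow> real) \<Rightarrow> bool" where
  "P2 N c f \<longleftrightarrow> (\<forall>i\<in>{1..N}. inj_on (fext N c f i) (closure (Xi N c i)))
     \<and> (\<forall>i\<in>{1..N}. \<forall>j\<in>{1..N}. i \<noteq> j \<longrightarrow>
          fext N c f i ` closure (Xi N c i) \<inter> fext N c f j ` closure (Xi N c j) = {})"

definition P3 :: "nat \<Rightarrow> (nat \<Rightarrow> real) \<Rightarrow> (real \<Rightarrow> real) \<Rightarrow> bool" where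
  "P3 N c f \<longleftrightarrow> cantor_set (attractor N c f)"

definition P4 :: "nat \<Rightarrow> (nat \<Rightarrow> real) \<Rightarrow> (real \<Rightarrow> real) \<Rightarrow> bool" where
  "P4 N c f \<longleftrightarrow> (\<forall>i\<in>{1 .. N - 1}. fext N c f i (c i) \<in> Xtilde N c f
                                    \<and> fext N c f (i + 1) (c i) \<in> Xtilde N c f)"

definition P5 :: "nat \<Rightarrow> (nat \<Rightarrow> real) \<Rightarrow> (real \<Rightarrow> real) \<Rightarrow> bool" where
  "P5 N c f \<longleftrightarrow> (\<exists>i\<in>{1 .. N - 1}.
      attractor N c f \<subseteq> closure (range (\<lambda>n. (f ^^ n) (fext N c f i (c i))))
    \<or> attractor N c f \<subseteq> closure (range (\<lambda>n. (f ^^ n) (fext N c f (i + 1) (c i)))))"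

definition P6 :: "nat \<Rightarrow> (nat \<Rightarrow> real) \<Rightarrow> (real \<Rightarrow> real) \<Rightarrow> bool" where
  "P6 N c f \<longleftrightarrow> (\<forall>x\<in>Xtilde N c f. \<forall>i\<in>{1 .. N - 1}. c i \<in> Delta_lr N c f x)"

text \<open>Boundary points of the gaps (bounded complementary intervals) of S.\<close>
definition gap_bdry :: "real set \<Rightarrow> real set" where
  "gap_bdry S = {x \<in> S. \<exists>y\<in>S. y \<noteq> x \<and> {min x y <..< max x y} \<inter> S = {}}"

definition fwd_orbit :: "(real \<Rightarrow> real) \<Rightarrow> real \<Rightarrow> real set" where
  "fwd_orbit f y = range (\<lambda>n. (f ^^ n) y)"

definition well_cutting :: "nat \<Rightarrow> (nat \<Rightarrow> real) \<Rightarrow> (real \<Rightarrow> real) \<Rightarrow> (nat \<Rightarrow> real) \<Rightarrow> bool" where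
  "well_cutting N c f \<xi> \<longleftrightarrow>
     (\<forall>r. \<xi> r = (f ^^ r) (\<xi> 0))
     \<and> \<xi> 0 \<in> attractor N c f \<inter> Xtilde N c f
     \<and> (\<forall>r. \<xi> r \<notin> gap_bdry (attractor N c f)
           \<and> \<xi> r \<notin> fwd_orbit f (c 0) \<and> \<xi> r \<notin> fwd_orbit f (c N)
           \<and> (\<forall>i\<in>{1 .. N - 1}. \<xi> r \<notin> fwd_orbit f (fext N c f i (c i))
                               \<and> \<xi> r \<notin> fwd_orbit f (fext N c f (i + 1) (c i))))"

definition wc_phi :: "real \<Rightarrow> (nat \<Rightarrow> real) \<Rightarrow> real \<Rightarrow> real" where
  "wc_phi lam \<xi> x = x + (\<Sum>n. if 1 \<le> n \<and> \<xi> n < x then lam ^ n else 0)"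

end

theory Submission
  imports Defs
begin


definition W :: "real \<Rightarrow> (nat \<Rightarrow> bool) \<Rightarrow> real" where
  "W lam P = (\<Sum>n. if P n then lam ^ n else 0)"

lemma W_summable: "0 < lam \<Longrightarrow> lam < 1 \<Longrightarrow> summable (\<lambda>n. if P n then lam ^ n else (0::real))"
  by (rule summable_comparison_test[of _ "\<lambda>n. lam ^ n"]) (auto intro!: summable_geometric exI[of _ 0])

lemma W_nonneg: "0 < lam \<Longrightarrow> lam < 1 \<Longrightarrow> 0 \<le> W lam P"
  unfolding W_def by (rule suminf_nonneg[OF W_summable]) auto

lemma W_add: assumes "0 < lam" "lam < 1" "\<And>n. \<not> (P n \<and> Q n)"
  shows "W lam (\<lambda>n. P n \<or> Q n) = W lam P + W lam Q"
proof -
  have "W lam P + W lam Q = (\<Sum>n. (if P n then lam ^ n else 0) + (if Q n then lam ^ n else 0))"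
    unfolding W_def by (rule suminf_add[OF W_summable W_summable]) (use assms in auto)
  also have "\<dots> = W lam (\<lambda>n. P n \<or> Q n)" unfolding W_def
    by (rule suminf_cong) (use assms(3) in auto)
  finally show ?thesis by simp
qed

lemma W_mono: assumes "0 < lam" "lam < 1" "\<And>n. P n \<Longrightarrow> Q n"
  shows "W lam P \<le> W lam Q"
  unfolding W_def by (rule suminf_le[OF _ W_summable W_summable]) (use assms in auto)

lemma W_single: "W lam (\<lambda>n. n = r) = lam ^ r"
  unfolding W_def using sums_single[of r "\<lambda>n. lam ^ n"] by (simp add: sums_iff)

lemma W_ge: assumes "0 < lam" "lam < 1" "P r" shows "lam ^ r \<le> W lam P"
proof -
  have "W lam (\<lambda>n. n = r) \<le> W lam P" by (rule W_mono) (use assms in auto)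
  thus ?thesis by (simp add: W_single)
qed

lemma W_tail_bound: assumes "0 < lam" "lam < 1" "\<And>n. n < M \<Longrightarrow> \<not> P n"
  shows "W lam P \<le> lam ^ M / (1 - lam)"
proof -
  have s: "(\<lambda>n. if M \<le> n then lam ^ n else 0) sums (lam ^ M / (1 - lam))"
  proof -
    have "(\<lambda>i. lam ^ M * lam ^ i) sums (lam ^ M * (1 / (1 - lam)))"
      by (rule sums_mult[OF geometric_sums]) (use assms in auto)
    hence "(\<lambda>i. (\<lambda>n. if M \<le> n then lam ^ n else 0) (i + M)) sums (lam ^ M / (1 - lam) + (\<Sum>i<M. (\<lambda>n. if M \<le> n then lam ^ n else 0) i))"
      by (simp add: power_add mult.commute)
    thus ?thesis by (subst (asm) sums_iff_shift) simp
  qed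
  have "W lam P \<le> (\<Sum>n. if M \<le> n then lam ^ n else 0)"
    unfolding W_def
    by (rule suminf_le[OF _ W_summable]) (use assms s in \<open>auto simp: sums_iff not_le\<close>)
  thus ?thesis using s by (simp add: sums_iff)
qed

lemma W_tail: assumes "0 < lam" "lam < 1" "\<And>n. eventually (\<lambda>y. \<not> P y n) F"
  shows "((\<lambda>y. W lam (P y)) \<longlongrightarrow> 0) F"
proof (rule tendstoI)
  fix e :: real assume e: "0 < e"
  obtain M where M: "lam ^ M < e * (1 - lam)"
    using real_arch_pow_inv[of "e * (1 - lam)" lam] assms e by auto
  have "eventually (\<lambda>y. \<forall>n\<in>{..<M}. \<not> P y n) F"
    by (rule eventually_ball_finite) (use assms(3) in auto)
  thus "eventually (\<lambda>y. dist (W lam (P y)) 0 < e) F"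
  proof (rule eventually_mono)
    fix y assume "\<forall>n\<in>{..<M}. \<not> P y n"
    hence "W lam (P y) \<le> lam ^ M / (1 - lam)" by (intro W_tail_bound) (use assms in auto)
    also have "\<dots> < e" using M assms by (simp add: field_simps)
    finally show "dist (W lam (P y)) 0 < e" using W_nonneg[OF assms(1,2)] by simp
  qed
qed



context fixes lam :: real and \<xi> :: "nat \<Rightarrow> real"
  assumes lam: "0 < lam" "lam < 1"
begin

lemma phi_eq: "wc_phi lam \<xi> x = x + W lam (\<lambda>n. 1 \<le> n \<and> \<xi> n < x)"
  unfolding wc_phi_def W_def by simp

lemma S_split: "x \<le> y \<Longrightarrow> W lam (\<lambda>n. 1 \<le> n \<and> \<xi> n < y)
   = W lam (\<lambda>n. 1 \<le> n \<and> \<xi> n < x) + W lam (\<lambda>n. 1 \<le> n \<and> x \<le> \<xi> n \<and> \<xi> n < y)"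
  by (subst W_add[symmetric]) (use lam in \<open>auto intro!: arg_cong[where f="W lam"]\<close>)

lemma S_split3: "x < y \<Longrightarrow> W lam (\<lambda>n. 1 \<le> n \<and> x \<le> \<xi> n \<and> \<xi> n < y)
   = W lam (\<lambda>n. 1 \<le> n \<and> \<xi> n = x) + W lam (\<lambda>n. 1 \<le> n \<and> x < \<xi> n \<and> \<xi> n < y)"
  by (subst W_add[symmetric]) (use lam in \<open>auto intro!: arg_cong[where f="W lam"] ext\<close>)

lemma phi_less: assumes "x < y" shows "wc_phi lam \<xi> x < wc_phi lam \<xi> y"
  using S_split[of x y] W_nonneg[OF lam, of "\<lambda>n. 1 \<le> n \<and> x \<le> \<xi> n \<and> \<xi> n < y"] assms by (simp add: phi_eq)

lemma phi_jump: assumes "x < y" "1 \<le> r" "\<xi> r = x"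
  shows "wc_phi lam \<xi> x + lam ^ r < wc_phi lam \<xi> y"
proof -
  have "lam ^ r \<le> W lam (\<lambda>n. 1 \<le> n \<and> x \<le> \<xi> n \<and> \<xi> n < y)"
    by (rule W_ge) (use lam assms in auto)
  thus ?thesis using S_split[of x y] assms by (simp add: phi_eq)
qed

lemma phi_left: "(wc_phi lam \<xi> \<longlongrightarrow> wc_phi lam \<xi> x) (at_left x)"
proof -
  let ?D = "\<lambda>y. W lam (\<lambda>n. 1 \<le> n \<and> y \<le> \<xi> n \<and> \<xi> n < x)"
  have D: "(?D \<longlongrightarrow> 0) (at_left x)"
  proof (rule W_tail[OF lam])
    fix n show "eventually (\<lambda>y. \<not> (1 \<le> n \<and> y \<le> \<xi> n \<and> \<xi> n < x)) (at_left x)"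
    proof (cases "\<xi> n < x")
      case True
      have "eventually (\<lambda>y. y \<in> {\<xi> n<..<x}) (at_left x)" by (rule eventually_at_left_real[OF True])
      thus ?thesis by (rule eventually_mono) auto
    qed auto
  qed
  have "((\<lambda>y. y + W lam (\<lambda>n. 1 \<le> n \<and> \<xi> n < x) - ?D y) \<longlongrightarrow> x + W lam (\<lambda>n. 1 \<le> n \<and> \<xi> n < x) - 0) (at_left x)"
    by (intro tendsto_intros D)
  hence "((\<lambda>y. y + W lam (\<lambda>n. 1 \<le> n \<and> \<xi> n < x) - ?D y) \<longlongrightarrow> wc_phi lam \<xi> x) (at_left x)"
    by (simp add: phi_eq)
  note lim = this
  have ev: "eventually (\<lambda>y. y \<in> {x - 1<..<x}) (at_left x)"
    by (rule eventually_at_left_real) simp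
  have evq: "eventually (\<lambda>y. y + W lam (\<lambda>n. 1 \<le> n \<and> \<xi> n < x) - ?D y = wc_phi lam \<xi> y) (at_left x)"
    using ev proof (rule eventually_mono)
    fix y assume "y \<in> {x - 1<..<x}"
    thus "y + W lam (\<lambda>n. 1 \<le> n \<and> \<xi> n < x) - ?D y = wc_phi lam \<xi> y"
      using S_split[of y x] by (simp add: phi_eq)
  qed
  show ?thesis by (rule Lim_transform_eventually[OF lim evq])
qed

lemma phi_right: "(wc_phi lam \<xi> \<longlongrightarrow> wc_phi lam \<xi> x + W lam (\<lambda>n. 1 \<le> n \<and> \<xi> n = x)) (at_right x)"
proof -
  let ?D = "\<lambda>y. W lam (\<lambda>n. 1 \<le> n \<and> x < \<xi> n \<and> \<xi> n < y)"
  let ?C = "W lam (\<lambda>n. 1 \<le> n \<and> \<xi> n = x)"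
  have D: "(?D \<longlongrightarrow> 0) (at_right x)"
  proof (rule W_tail[OF lam])
    fix n show "eventually (\<lambda>y. \<not> (1 \<le> n \<and> x < \<xi> n \<and> \<xi> n < y)) (at_right x)"
    proof (cases "x < \<xi> n")
      case True
      have "eventually (\<lambda>y. y \<in> {x<..<\<xi> n}) (at_right x)" by (rule eventually_at_right_real[OF True])
      thus ?thesis by (rule eventually_mono) auto
    qed auto
  qed
  have "((\<lambda>y. y + W lam (\<lambda>n. 1 \<le> n \<and> \<xi> n < x) + ?C + ?D y) \<longlongrightarrow> x + W lam (\<lambda>n. 1 \<le> n \<and> \<xi> n < x) + ?C + 0) (at_right x)"
    by (intro tendsto_intros D)
  hence "((\<lambda>y. y + W lam (\<lambda>n. 1 \<le> n \<and> \<xi> n < x) + ?C + ?D y) \<longlongrightarrow> wc_phi lam \<xi> x + ?C) (at_right x)"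
    by (simp add: phi_eq)
  note lim = this
  have ev: "eventually (\<lambda>y. y \<in> {x<..<x+1}) (at_right x)"
    by (rule eventually_at_right_real) simp
  have evq: "eventually (\<lambda>y. y + W lam (\<lambda>n. 1 \<le> n \<and> \<xi> n < x) + ?C + ?D y = wc_phi lam \<xi> y) (at_right x)"
    using ev proof (rule eventually_mono)
    fix y assume "y \<in> {x<..<x+1}"
    thus "y + W lam (\<lambda>n. 1 \<le> n \<and> \<xi> n < x) + ?C + ?D y = wc_phi lam \<xi> y"
      using S_split[of x y] S_split3[of x y] by (simp add: phi_eq)
  qed
  show ?thesis by (rule Lim_transform_eventually[OF lim evq])
qed

end


lemma loc_aff:
  assumes P1: "P1 N c f lam" and x: "x \<in> XX c N - Delta N c" "x \<noteq> c 0" "x \<noteq> c N"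
  shows "\<exists>\<delta>>0. \<forall>z. \<bar>z - x\<bar> < \<delta> \<longrightarrow> f z = f x + lam * (z - x)"
proof -
  define i where "i = (LEAST k. x < c k)"
  have xN: "x < c N" using x by (auto simp: XX_def)
  have x0: "c 0 < x" using x by (auto simp: XX_def)
  have xi: "x < c i" unfolding i_def by (rule LeastI[of _ N]) (rule xN)
  have iN: "i \<le> N" unfolding i_def by (rule Least_le) (rule xN)
  have i0: "i \<noteq> 0" using xi x0 by (metis less_asym)
  have "\<not> x < c (i - 1)" unfolding i_def by (rule not_less_Least) (use i0 i_def in auto)
  moreover have "x \<noteq> c (i - 1)"
  proof (cases "i - 1 = 0")
    case True thus ?thesis using x by auto
  next
    case False
    hence "c (i - 1) \<in> Delta N c" using iN i0 unfolding Delta_def by (intro imageI) auto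
    thus ?thesis using x by auto
  qed
  ultimately have xl: "c (i - 1) < x" by auto
  have sub: "{c (i - 1) <..< c i} \<subseteq> Xi N c i"
    unfolding Xi_def by auto
  obtain b where b: "\<forall>y\<in>Xi N c i. f y = lam * y + b"
  proof -
    have "i \<in> {1..N}" using iN i0 by auto
    thus ?thesis using P1 that unfolding P1_def by blast
  qed
  show ?thesis
  proof (intro exI[of _ "min (x - c (i - 1)) (c i - x)"] conjI allI impI)
    show "0 < min (x - c (i - 1)) (c i - x)" using xl xi by auto
    fix z assume "\<bar>z - x\<bar> < min (x - c (i - 1)) (c i - x)"
    hence "z \<in> {c (i - 1) <..< c i}" by (auto simp: abs_less_iff)
    hence "z \<in> Xi N c i" using sub by blast
    moreover have "x \<in> Xi N c i" using sub xl xi by auto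
    ultimately show "f z = f x + lam * (z - x)" using b by (auto simp: algebra_simps)
  qed
qed

lemma finite_unif_delta:
  assumes "finite V" "\<forall>v\<in>V. \<exists>\<delta>>0. \<forall>z. \<bar>z - v\<bar> < \<delta> \<longrightarrow> Q v z"
  shows "\<exists>\<delta>>0. \<forall>v\<in>V. \<forall>z. \<bar>z - v\<bar> < (\<delta>::real) \<longrightarrow> Q v z"
  using assms
proof (induction V rule: finite_induct)
  case empty thus ?case by (auto intro: exI[of _ 1])
next
  case (insert a V)
  obtain d1 where d1: "d1 > 0" "\<forall>v\<in>V. \<forall>z. \<bar>z - v\<bar> < d1 \<longrightarrow> Q v z" using insert by auto
  obtain d2 where d2: "d2 > 0" "\<forall>z. \<bar>z - a\<bar> < d2 \<longrightarrow> Q a z" using insert by auto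
  show ?case using d1 d2 by (intro exI[of _ "min d1 d2"]) auto
qed



lemma xi_props:
  assumes wc: "well_cutting N c f \<xi>"
  shows "\<xi> r \<in> XX c N - Delta N c" "\<xi> r \<noteq> c 0" "\<xi> r \<noteq> c N" "\<xi> (Suc r) = f (\<xi> r)"
proof -
  have e: "\<And>r. \<xi> r = (f ^^ r) (\<xi> 0)" and x0: "\<xi> 0 \<in> Xtilde N c f" using wc unfolding well_cutting_def by blast+
  show "\<xi> r \<in> XX c N - Delta N c" using x0 e[of r] unfolding Xtilde_def by auto
  have "c 0 \<in> fwd_orbit f (c 0)" "c N \<in> fwd_orbit f (c N)" unfolding fwd_orbit_def
    by (metis funpow_0 rangeI)+
  moreover have "\<xi> r \<notin> fwd_orbit f (c 0) \<and> \<xi> r \<notin> fwd_orbit f (c N)"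
    using wc unfolding well_cutting_def by blast
  ultimately show "\<xi> r \<noteq> c 0" "\<xi> r \<noteq> c N" by auto
  show "\<xi> (Suc r) = f (\<xi> r)" using e[of r] e[of "Suc r"] by simp
qed

lemma xi_inj:
  assumes P1: "P1 N c f lam" and P3: "P3 N c f" and P5: "P5 N c f"
    and wc: "well_cutting N c f \<xi>"
  shows "inj \<xi>"
proof (rule ccontr)
  assume "\<not> inj \<xi>"
  then obtain a b where ab: "a \<noteq> b" "\<xi> a = \<xi> b" unfolding inj_def by blast
  obtain p q where pq: "p < q" "\<xi> p = \<xi> q"
  proof (cases "a < b")
    case True thus ?thesis using that ab by blast
  next
    case False hence "b < a" using ab by simp
    thus ?thesis using that ab by metis
  qed
  have lam: "0 < lam" "lam < 1" using P1 unfolding P1_def by auto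
  have e: "\<And>r. \<xi> r = (f ^^ r) (\<xi> 0)" using wc unfolding well_cutting_def by blast
  have per: "\<xi> (m + q) = \<xi> (m + p)" for m
    using e[of "m+q"] e[of "m+p"] e[of p] e[of q] pq(2) by (simp add: funpow_add)
  have rng: "\<xi> n \<in> \<xi> ` {..<q}" for n
  proof (induction n rule: less_induct)
    case (less n)
    show ?case
    proof (cases "n < q")
      case False
      define m where "m = n - q"
      have m: "n = m + q" using False unfolding m_def by simp
      have "\<xi> n = \<xi> (m + p)" using per m by simp
      moreover have "m + p < n" using m pq by simp
      ultimately show ?thesis using less by simp
    qed auto
  qed
  define V where "V = \<xi> ` {..<q}"
  have finV: "finite V" unfolding V_def by simp
  have rngV: "range \<xi> = V" using rng unfolding V_def by auto
  have "\<forall>v\<in>V. \<exists>\<delta>>0. \<forall>z. \<bar>z - v\<bar> < \<delta> \<longrightarrow> f z = f v + lam * (z - v)"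
    unfolding V_def using loc_aff[OF P1 xi_props(1-3)[OF wc]] by auto
  from finite_unif_delta[OF finV this] obtain \<delta> where
    \<delta>: "\<delta> > 0" "\<And>v z. v \<in> V \<Longrightarrow> \<bar>z - v\<bar> < \<delta> \<Longrightarrow> f z = f v + lam * (z - v)" by blast
  have shadow: "\<bar>(f ^^ j) z - \<xi> j\<bar> = lam ^ j * \<bar>z - \<xi> 0\<bar>" if z: "\<bar>z - \<xi> 0\<bar> < \<delta>" for z j
  proof (induction j)
    case 0 show ?case by simp
  next
    case (Suc j)
    have "lam ^ j \<le> 1" using lam by (simp add: power_le_one)
    hence "lam ^ j * \<bar>z - \<xi> 0\<bar> \<le> \<bar>z - \<xi> 0\<bar>" using mult_right_mono[OF \<open>lam ^ j \<le> 1\<close> abs_ge_zero[of "z - \<xi> 0"]] by simp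
    hence "\<bar>(f ^^ j) z - \<xi> j\<bar> < \<delta>" using Suc z by simp
    hence "f ((f ^^ j) z) = f (\<xi> j) + lam * ((f ^^ j) z - \<xi> j)"
      using \<delta>(2)[of "\<xi> j"] rngV by auto
    thus ?case using Suc xi_props(4)[OF wc, of j] lam by (simp add: abs_mult)
  qed
  define L where "L = attractor N c f"
  have cant: "L \<noteq> {}" "\<And>x. x \<in> L \<Longrightarrow> x islimpt L" using P3 unfolding P3_def cantor_set_def L_def by auto
  obtain y where y: "L \<subseteq> closure (range (\<lambda>n. (f ^^ n) y))"
    using P5 unfolding P5_def L_def by blast
  have x0L: "\<xi> 0 \<in> L" using wc unfolding well_cutting_def L_def by blast
  obtain t0 where t0: "dist ((f ^^ t0) y) (\<xi> 0) < \<delta>"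
  proof -
    have "\<xi> 0 \<in> closure (range (\<lambda>n. (f ^^ n) y))" using y x0L by blast
    then obtain u where "u \<in> range (\<lambda>n. (f ^^ n) y)" "dist u (\<xi> 0) < \<delta>"
      using \<delta>(1) unfolding closure_approachable by blast
    thus ?thesis using that by blast
  qed
  have "\<not> L \<subseteq> V"
  proof
    assume "L \<subseteq> V"
    hence "\<xi> 0 islimpt V" using cant(2)[OF x0L] islimpt_subset by blast
    thus False using islimpt_finite[OF finV] by blast
  qed
  then obtain q0 where q0: "q0 \<in> L" "q0 \<notin> V" by blast
  obtain d where d: "d > 0" "\<And>v. v \<in> V \<Longrightarrow> v \<noteq> q0 \<Longrightarrow> d \<le> dist q0 v"
    using finite_set_avoid[OF finV, of q0] by blast
  define \<epsilon> where "\<epsilon> = d / 2"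
  have \<epsilon>: "\<epsilon> > 0" unfolding \<epsilon>_def using d by simp
  obtain J where J: "lam ^ J < \<epsilon> / \<delta>" using real_arch_pow_inv[of "\<epsilon> / \<delta>" lam] \<epsilon> \<delta> lam by auto
  have far: "n < t0 + J" if "dist ((f ^^ n) y) q0 < \<epsilon>" for n
  proof (rule ccontr)
    assume "\<not> n < t0 + J"
    define j where "j = n - t0"
    have j: "n = j + t0" "J \<le> j" using \<open>\<not> n < t0 + J\<close> unfolding j_def by simp_all
    define z where "z = (f ^^ t0) y"
    have fn: "(f ^^ n) y = (f ^^ j) z" unfolding z_def j by (simp add: funpow_add)
    have zd: "\<bar>z - \<xi> 0\<bar> < \<delta>" using t0 unfolding z_def dist_real_def .
    have "lam ^ j \<le> lam ^ J" using j lam by (simp add: power_decreasing)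
    have "\<bar>(f ^^ j) z - \<xi> j\<bar> = lam ^ j * \<bar>z - \<xi> 0\<bar>" by (rule shadow[OF zd])
    also have "\<dots> \<le> lam ^ J * \<bar>z - \<xi> 0\<bar>" using \<open>lam ^ j \<le> lam ^ J\<close> by (simp add: mult_right_mono)
    also have "\<dots> \<le> lam ^ J * \<delta>" using zd lam by (simp add: mult_left_mono)
    also have "\<dots> < \<epsilon>" using J \<delta> by (simp add: field_simps)
    finally have a: "\<bar>(f ^^ j) z - \<xi> j\<bar> < \<epsilon>" .
    have "\<xi> j \<in> V" using rngV by auto
    hence "\<xi> j \<noteq> q0" using q0 by auto
    hence "d \<le> dist q0 (\<xi> j)" using d \<open>\<xi> j \<in> V\<close> by auto
    thus False using a that fn unfolding \<epsilon>_def dist_real_def by linarith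
  qed
  have "q0 islimpt ((\<lambda>n. (f ^^ n) y) ` {..<t0 + J})"
    unfolding islimpt_approachable
  proof (intro allI impI)
    fix e :: real assume e: "e > 0"
    define e2 where "e2 = min e \<epsilon> / 2"
    have e2: "e2 > 0" using e \<epsilon> unfolding e2_def by simp
    obtain x' where x': "x' \<in> L" "x' \<noteq> q0" "dist x' q0 < e2"
      using cant(2)[OF q0(1)] e2 unfolding islimpt_approachable by blast
    have "x' \<in> closure (range (\<lambda>n. (f ^^ n) y))" using x' y by auto
    moreover have "min (dist x' q0) e2 > 0" using x' e2 by simp
    ultimately obtain u where u: "u \<in> range (\<lambda>n. (f ^^ n) y)" "dist u x' < min (dist x' q0) e2"
      unfolding closure_approachable by blast
    then obtain n where n: "u = (f ^^ n) y" by auto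
    have "dist u q0 \<le> dist u x' + dist x' q0" by (rule dist_triangle)
    hence uq: "dist u q0 < 2 * e2" using u x' by simp
    have "u \<noteq> q0" using u(2) by (auto simp: dist_commute)
    moreover have "dist u q0 < e" using uq unfolding e2_def by simp
    moreover have "n < t0 + J" using far[of n] uq n unfolding e2_def by simp
    ultimately show "\<exists>x'\<in>(\<lambda>n. (f ^^ n) y) ` {..<t0 + J}. x' \<noteq> q0 \<and> dist x' q0 < e"
      using n by auto
  qed
  thus False using islimpt_finite by blast
qed



theorem lemma8:
  fixes N :: nat and c :: "nat \<Rightarrow> real" and f :: "real \<Rightarrow> real" and lam :: real
    and \<xi> :: "nat \<Rightarrow> real"
  assumes "N \<ge> 2" and "strict_mono_on {0..N} c"
    and "f ` XX c N \<subseteq> XX c N"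
    and "P1 N c f lam" and "P2 N c f" and "P3 N c f" and "P4 N c f" and "P5 N c f" and "P6 N c f"
    and "well_cutting N c f \<xi>"
  defines "\<phi> \<equiv> wc_phi lam \<xi>"
    and "G \<equiv> (\<lambda>r. {wc_phi lam \<xi> (\<xi> r) <.. wc_phi lam \<xi> (\<xi> r) + lam ^ r})"
  shows "(strict_mono_on {c 0 .. c N} \<phi>)
    \<and> (\<forall>x\<in>{c 0 .. c N}. continuous (at x within {c 0 .. x}) \<phi>)
    \<and> (\<forall>x\<in>{c 0 .. c N} - {\<xi> r | r. r \<ge> 1}. continuous (at x within {c 0 .. c N}) \<phi>)
    \<and> (\<forall>r\<ge>1. (\<phi> \<longlongrightarrow> \<phi> (\<xi> r) + lam ^ r) (at (\<xi> r) within {\<xi> r <.. c N}))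
    \<and> (\<phi> ` {c 0 .. c N} = {\<phi> (c 0) .. \<phi> (c N)} - (\<Union>r\<in>{1..}. G r))
    \<and> (\<forall>r l. 1 \<le> r \<longrightarrow> 1 \<le> l \<longrightarrow> r \<noteq> l \<longrightarrow> closure (G r) \<inter> closure (G l) = {})"
proof -
  note wc = assms(10)
  have lam: "0 < lam" "lam < 1" using assms(4) unfolding P1_def by auto
  have inj: "inj \<xi>" by (rule xi_inj[OF assms(4) assms(6) assms(8) wc])
  have xiX: "c 0 < \<xi> r \<and> \<xi> r < c N" for r
    using xi_props(1-3)[OF wc, of r] unfolding XX_def by auto
  have cN: "c 0 < c N" using xiX[of 0] by simp
  define C where "C x = W lam (\<lambda>n. 1 \<le> n \<and> \<xi> n = x)" for x
  have C0: "C x = 0" if "x \<notin> {\<xi> r | r. r \<ge> 1}" for x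
  proof -
    have "(\<lambda>n. 1 \<le> n \<and> \<xi> n = x) = (\<lambda>n. False)" using that by auto
    hence "C x = W lam (\<lambda>n. False)" unfolding C_def by simp
    thus ?thesis by (simp add: W_def)
  qed
  have Cr: "C (\<xi> r) = lam ^ r" if "1 \<le> r" for r
  proof -
    have "(\<lambda>n. 1 \<le> n \<and> \<xi> n = \<xi> r) = (\<lambda>n. n = r)" using that inj by (auto simp: inj_eq)
    thus ?thesis unfolding C_def by (simp add: W_single)
  qed
  note left = phi_left[OF lam, of \<xi>]
  note right = phi_right[OF lam, of \<xi>, folded C_def]
  note less = phi_less[OF lam, of _ _ \<xi>]
  note jump = phi_jump[OF lam, of _ _ _ \<xi>]
  have le: "x \<le> y \<Longrightarrow> \<phi> x \<le> \<phi> y" for x y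
    unfolding \<phi>_def using less[of x y] by (cases "x = y") auto
  have A1: "strict_mono_on {c 0 .. c N} \<phi>"
    unfolding strict_mono_on_def \<phi>_def using less by blast
  have A2: "\<forall>x\<in>{c 0 .. c N}. continuous (at x within {c 0 .. x}) \<phi>"
  proof
    fix x assume x: "x \<in> {c 0 .. c N}"
    show "continuous (at x within {c 0 .. x}) \<phi>"
    proof (cases "x = c 0")
      case True
      have "\<not> c 0 islimpt {c 0}" by (simp add: islimpt_insert)
      hence "at (c 0) within {c 0} = bot" using trivial_limit_within by blast
      thus ?thesis using True by (simp add: continuous_within)
    next
      case False
      hence "c 0 < x" using x by auto
      thus ?thesis unfolding continuous_within \<phi>_def using left
        by (simp add: at_within_Icc_at_left)
    qed
  qed
  have A3: "\<forall>x\<in>{c 0 .. c N} - {\<xi> r | r. r \<ge> 1}. continuous (at x within {c 0 .. c N}) \<phi>"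
  proof
    fix x assume x: "x \<in> {c 0 .. c N} - {\<xi> r | r. r \<ge> 1}"
    have r0: "(wc_phi lam \<xi> \<longlongrightarrow> wc_phi lam \<xi> x) (at_right x)"
      using right[of x] C0[of x] x by simp
    have "(wc_phi lam \<xi> \<longlongrightarrow> wc_phi lam \<xi> x) (at x)"
      by (rule filterlim_split_at[OF left r0])
    hence "(wc_phi lam \<xi> \<longlongrightarrow> wc_phi lam \<xi> x) (at x within {c 0 .. c N})"
      by (rule tendsto_mono[OF at_le, rotated]) simp
    thus "continuous (at x within {c 0 .. c N}) \<phi>" unfolding continuous_within \<phi>_def .
  qed
  have A4: "\<forall>r\<ge>1. (\<phi> \<longlongrightarrow> \<phi> (\<xi> r) + lam ^ r) (at (\<xi> r) within {\<xi> r <.. c N})"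
  proof (intro allI impI)
    fix r :: nat assume r: "1 \<le> r"
    have "(wc_phi lam \<xi> \<longlongrightarrow> wc_phi lam \<xi> (\<xi> r) + lam ^ r) (at_right (\<xi> r))"
      using right[of "\<xi> r"] Cr[OF r] by simp
    thus "(\<phi> \<longlongrightarrow> \<phi> (\<xi> r) + lam ^ r) (at (\<xi> r) within {\<xi> r <.. c N})"
      unfolding \<phi>_def by (rule tendsto_mono[OF at_le, rotated]) auto
  qed
  have A5: "\<phi> ` {c 0 .. c N} = {\<phi> (c 0) .. \<phi> (c N)} - (\<Union>r\<in>{1..}. G r)"
  proof
    show "\<phi> ` {c 0 .. c N} \<subseteq> {\<phi> (c 0) .. \<phi> (c N)} - (\<Union>r\<in>{1..}. G r)"
    proof
      fix v assume "v \<in> \<phi> ` {c 0 .. c N}"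
      then obtain x where x: "x \<in> {c 0 .. c N}" "v = \<phi> x" by auto
      have "v \<in> {\<phi> (c 0) .. \<phi> (c N)}" using x le by auto
      moreover have "v \<notin> G r" if r1: "1 \<le> r" for r
      proof (cases "x \<le> \<xi> r")
        case True thus ?thesis using le[OF True] x unfolding G_def \<phi>_def by auto
      next
        case False
        have "\<phi> (\<xi> r) + lam ^ r < \<phi> x" unfolding \<phi>_def by (rule jump) (use False r1 in auto)
        thus ?thesis using x unfolding G_def \<phi>_def by auto
      qed
      ultimately show "v \<in> {\<phi> (c 0) .. \<phi> (c N)} - (\<Union>r\<in>{1..}. G r)" by auto
    qed
  next
    show "{\<phi> (c 0) .. \<phi> (c N)} - (\<Union>r\<in>{1..}. G r) \<subseteq> \<phi> ` {c 0 .. c N}"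
    proof
      fix v assume v: "v \<in> {\<phi> (c 0) .. \<phi> (c N)} - (\<Union>r\<in>{1..}. G r)"
      define T where "T = {y \<in> {c 0 .. c N}. \<phi> y \<le> v}"
      define s where "s = Sup T"
      have T0: "c 0 \<in> T" using v cN unfolding T_def by auto
      have bdd: "bdd_above T" unfolding T_def by (rule bdd_aboveI[of _ "c N"]) auto
      have sT: "y \<le> s" if "y \<in> T" for y unfolding s_def by (rule cSup_upper[OF that bdd])
      have s0: "c 0 \<le> s" using sT[OF T0] .
      have sN: "s \<le> c N" unfolding s_def by (rule cSup_least) (use T0 T_def in auto)
      have up: "\<phi> s \<le> v"
      proof (rule ccontr)
        assume "\<not> \<phi> s \<le> v"
        hence gt: "v < \<phi> s" by simp
        have "s \<noteq> c 0" using gt T0 unfolding T_def by auto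
        hence s0': "c 0 < s" using s0 by simp
        have "eventually (\<lambda>y. v < \<phi> y) (at_left s)"
          using order_tendstoD(1)[OF left[of s] gt[unfolded \<phi>_def]] unfolding \<phi>_def .
        moreover have "eventually (\<lambda>y. y \<in> {c 0<..<s}) (at_left s)"
          by (rule eventually_at_left_real[OF s0'])
        ultimately have "eventually (\<lambda>y. v < \<phi> y \<and> y \<in> {c 0<..<s}) (at_left s)"
          by (rule eventually_conj)
        then obtain y where y: "v < \<phi> y" "c 0 < y" "y < s"
          using eventually_happens'[OF trivial_limit_at_left_real] by fastforce
        then obtain t where t: "t \<in> T" "y < t" using less_cSup_iff[of T y] T0 bdd unfolding s_def by auto
        have "\<phi> y < \<phi> t" using less[OF t(2)] unfolding \<phi>_def .
        thus False using t y unfolding T_def by auto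
      qed
      have lo: "v \<le> \<phi> s"
      proof (rule ccontr)
        assume "\<not> v \<le> \<phi> s"
        hence lt: "\<phi> s < v" by simp
        have "s \<noteq> c N" using lt v by auto
        hence sN': "s < c N" using sN by simp
        have ev: "eventually (\<lambda>y. y \<in> {s<..<c N}) (at_right s)"
          by (rule eventually_at_right_real[OF sN'])
        have "eventually (\<lambda>y. v \<le> wc_phi lam \<xi> y) (at_right s)"
          using ev
        proof (rule eventually_mono)
          fix y assume y: "y \<in> {s<..<c N}"
          show "v \<le> wc_phi lam \<xi> y"
          proof (rule ccontr)
            assume "\<not> v \<le> wc_phi lam \<xi> y"
            hence "y \<in> T" using y s0 unfolding T_def \<phi>_def by auto
            thus False using sT y by force
          qed
        qed
        hence vle: "v \<le> \<phi> s + C s"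
          using tendsto_lowerbound[OF right[of s]] unfolding \<phi>_def by simp
        show False
        proof (cases "s \<in> {\<xi> r | r. r \<ge> 1}")
          case True
          then obtain r where r: "1 \<le> r" "s = \<xi> r" by auto
          have "v \<in> G r" using vle lt Cr[OF r(1)] r unfolding G_def \<phi>_def by auto
          thus False using v r by auto
        next
          case False
          thus False using vle lt C0 by simp
        qed
      qed
      show "v \<in> \<phi> ` {c 0 .. c N}" using up lo s0 sN by (intro image_eqI[of _ _ s]) auto
    qed
  qed
  have disj: "closure (G r) \<inter> closure (G l) = {}" if "1 \<le> r" "\<xi> r < \<xi> l" for r l
  proof -
    have "\<phi> (\<xi> r) + lam ^ r < \<phi> (\<xi> l)" unfolding \<phi>_def by (rule jump) (use that in auto)
    moreover have "closure (G k) = {\<phi> (\<xi> k) .. \<phi> (\<xi> k) + lam ^ k}" for k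
      unfolding G_def \<phi>_def using lam by (intro closure_greaterThanAtMost) simp
    ultimately show ?thesis by auto
  qed
  have A6: "\<forall>r l. 1 \<le> r \<longrightarrow> 1 \<le> l \<longrightarrow> r \<noteq> l \<longrightarrow> closure (G r) \<inter> closure (G l) = {}"
  proof (intro allI impI)
    fix r l :: nat assume rl: "1 \<le> r" "1 \<le> l" "r \<noteq> l"
    hence "\<xi> r \<noteq> \<xi> l" using inj by (auto simp: inj_eq)
    thus "closure (G r) \<inter> closure (G l) = {}"
      using disj[of r l] disj[of l r] rl by (cases "\<xi> r < \<xi> l") (auto simp: Int_commute)
  qed
  show ?thesis using A1 A2 A3 A4 A5 A6 by blast
qed


end
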